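(* Let $X,Y$ be real Hilbert spaces and $I$ either $[0,T]$ ($T>0$) or $[0,+\infty)$. Assume: $K\subset X$ is a nonempty closed convex cone; $A:X\to X$ satisfies $(Au-Av,u-v)_X\ge m_A\|u-v\|_X^2$ and $\|Au-Av\|_X\le L_A\|u-v\|_X$ for all $u,v\in X$, with $m_A,L_A>0$; $j:Y\times K\to\mathbb{R}$ is such that $j(\eta,\cdot)$ is convex, positively homogeneous and Lipschitz continuous on $K$ for every $\eta\in Y$, and there is $\alpha_j\ge0$ with $j(\eta_1,v_2)-j(\eta_1,v_1)+j(\eta_2,v_1)-j(\eta_2,v_2)\le\alpha_j\|\eta_1-\eta_2\|_Y\|v_1-v_2\|_X$ for all $\eta_i\in Y$, $v_i\in K$; $f\in C(I;X)$; and $\mathcal{R}:C(I;X)\to C(I;Y)$ and $\mathcal{S}:C(I;X)\to C(I;X)$ are history-dependent operators. Then there exists a unique function $u:I\to X$ such that $$-u(t)\in \mathrm{N}_{C(\mathcal{R}u(t),t)}\big(Au(t)+\mathcal{S}u(t)\big)\quad\forall\,t\in I,$$ and it satisfies $u\in C(I;K)$.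
   Context: An operator $\mathcal{P}:C(I;Z_1)\to C(I;Z_2)$ between spaces of continuous functions with values in normed spaces $Z_1,Z_2$ is history-dependent if for every compact $\mathcal J\subset I$ there is $L_{\mathcal J}>0$ with $\|\mathcal{P}u_1(t)-\mathcal{P}u_2(t)\|_{Z_2}\le L_{\mathcal J}\int_0^t\|u_1(s)-u_2(s)\|_{Z_1}ds$ for all $u_1,u_2\in C(I;Z_1)$, $t\in\mathcal J$. Define $J(\eta,v)=j(\eta,v)$ for $v\in K$, $J(\eta,v)=+\infty$ for $v\notin K$; $C(\eta)=\{\xi\in X: J(\eta,v)\ge(\xi,v)_X\ \forall v\in X\}$; $C(\eta,t)=f(t)-C(\eta)$. For a nonempty closed convex $D\subset X$, $\mathrm{N}_D(x)=\{\xi:(\xi,w-x)_X\le0\ \forall w\in D\}$ if $x\in D$, $\emptyset$ otherwise. *)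

theory Defs
  imports "HOL-Analysis.Analysis"
begin

definition maps_continuous :: "real set \<Rightarrow> ((real \<Rightarrow> 'a::real_normed_vector) \<Rightarrow> (real \<Rightarrow> 'b::real_normed_vector)) \<Rightarrow> bool" where
  "maps_continuous I P \<longleftrightarrow> (\<forall>u. continuous_on I u \<longrightarrow> continuous_on I (P u))"

definition history_dependent :: "real set \<Rightarrow> ((real \<Rightarrow> 'a::real_normed_vector) \<Rightarrow> (real \<Rightarrow> 'b::real_normed_vector)) \<Rightarrow> bool" where
  "history_dependent I P \<longleftrightarrow>
     (\<forall>J. compact J \<and> J \<subseteq> I \<longrightarrow>
        (\<exists>L>0. \<forall>u1 u2. continuous_on I u1 \<and> continuous_on I u2 \<longrightarrow>
            (\<forall>t\<in>J. norm (P u1 t - P u2 t) \<le> L * integral {0..t} (\<lambda>s. norm (u1 s - u2 s)))))"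

definition Jext :: "('b \<Rightarrow> 'a \<Rightarrow> real) \<Rightarrow> 'a set \<Rightarrow> 'b \<Rightarrow> 'a \<Rightarrow> ereal" where
  "Jext j K \<eta> v = (if v \<in> K then ereal (j \<eta> v) else \<infinity>)"

definition Cset :: "('b \<Rightarrow> 'a::real_inner \<Rightarrow> real) \<Rightarrow> 'a set \<Rightarrow> 'b \<Rightarrow> 'a set" where
  "Cset j K \<eta> = {\<xi>. \<forall>v. Jext j K \<eta> v \<ge> ereal (\<xi> \<bullet> v)}"

definition Cset_t :: "('b \<Rightarrow> 'a::real_inner \<Rightarrow> real) \<Rightarrow> 'a set \<Rightarrow> (real \<Rightarrow> 'a) \<Rightarrow> 'b \<Rightarrow> real \<Rightarrow> 'a set" where
  "Cset_t j K f \<eta> t = (\<lambda>\<xi>. f t - \<xi>) ` Cset j K \<eta>"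

definition normal_cone :: "'a::real_inner set \<Rightarrow> 'a \<Rightarrow> 'a set" where
  "normal_cone D x = (if x \<in> D then {\<xi>. \<forall>w\<in>D. \<xi> \<bullet> (w - x) \<le> 0} else {})"

end

theory Submission
  imports Defs
begin


lemma strong_mid:
  fixes x y z :: "'h::real_inner"
  shows "(norm ((1/2) *\<^sub>R (x + y) - z))\<^sup>2 = (1/2) * (norm (x - z))\<^sup>2 + (1/2) * (norm (y - z))\<^sup>2 - (1/4) * (norm (x - y))\<^sup>2"
  unfolding power2_norm_eq_inner
  by (simp add: inner_diff_left inner_diff_right inner_commute algebra_simps)

lemma step_sq:
  fixes p z v :: "'h::real_inner"
  shows "(norm ((1 - l) *\<^sub>R p + l *\<^sub>R v - z))\<^sup>2 = (norm (p - z))\<^sup>2 + 2 * l * ((p - z) \<bullet> (v - p)) + l\<^sup>2 * (norm (v - p))\<^sup>2"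
proof -
  have "(1 - l) *\<^sub>R p + l *\<^sub>R v - z = (p - z) + l *\<^sub>R (v - p)" by (simp add: algebra_simps)
  then show ?thesis unfolding power2_norm_eq_inner
    by (simp add: inner_diff_left inner_diff_right inner_commute algebra_simps power2_eq_square)
qed

lemma small_param:
  fixes a c :: real
  assumes "\<And>l. 0 < l \<Longrightarrow> l \<le> 1 \<Longrightarrow> a + l * c \<ge> 0" "c \<ge> 0"
  shows "a \<ge> 0"
proof (rule ccontr)
  assume "\<not> a \<ge> 0" hence a: "a < 0" by simp
  show False
  proof (cases "c = 0")
    case True then show ?thesis using assms(1)[of 1] a by simp
  next
    case False
    hence c: "c > 0" using assms(2) by simp
    define l where "l = min 1 (- a / (2 * c))"
    have l0: "0 < l" "l \<le> 1" using a c by (auto simp: l_def divide_neg_pos)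
    have "l * c \<le> (- a / (2 * c)) * c" unfolding l_def using c by (intro mult_right_mono) auto
    also have "\<dots> = - a / 2" using c by simp
    finally have "a + l * c < 0" using a by simp
    then show False using assms(1)[OF l0] by simp
  qed
qed

lemma prox_exists:
  fixes K :: "'h::{real_inner,complete_space} set" and \<phi> :: "'h \<Rightarrow> real"
  assumes K: "closed K" "convex K" "K \<noteq> {}" and cv: "convex_on K \<phi>" and lip: "L-lipschitz_on K \<phi>"
  shows "\<exists>p\<in>K. \<forall>v\<in>K. (p - z) \<bullet> (v - p) + \<phi> v - \<phi> p \<ge> 0"
proof -
  define F where "F v = (1/2) * (norm (v - z))\<^sup>2 + \<phi> v" for v
  obtain v0 where v0: "v0 \<in> K" using K by auto
  have L0: "L \<ge> 0" using lip lipschitz_on_nonneg by blast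
  have lb: "F v \<ge> \<phi> v0 - L * norm (z - v0) - L\<^sup>2/2" if v: "v\<in>K" for v
  proof -
    have "dist (\<phi> v) (\<phi> v0) \<le> L * dist v v0" using lipschitz_onD[OF lip v v0] .
    hence "\<phi> v \<ge> \<phi> v0 - L * norm (v - v0)" by (simp add: dist_real_def dist_norm)
    moreover have "norm (v - v0) \<le> norm (v - z) + norm (z - v0)" using norm_triangle_ineq[of "v - z" "z - v0"] by simp
    moreover have "(norm (v - z) - L)\<^sup>2 \<ge> 0" by simp
    ultimately have "\<phi> v \<ge> \<phi> v0 - L * norm (v - z) - L * norm (z - v0)"
      using L0 by (smt (verit) mult_left_mono distrib_left)
    moreover have "(1/2) * (norm (v - z))\<^sup>2 - L * norm (v - z) \<ge> - L\<^sup>2/2"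
      using \<open>(norm (v - z) - L)\<^sup>2 \<ge> 0\<close> by (simp add: power2_diff algebra_simps)
    ultimately show ?thesis unfolding F_def by linarith
  qed
  define \<mu> where "\<mu> = Inf (F ` K)"
  have bdd: "bdd_below (F ` K)" using lb by (intro bdd_belowI[of _ "\<phi> v0 - L * norm (z - v0) - L\<^sup>2/2"]) auto
  have mule: "\<mu> \<le> F v" if "v \<in> K" for v unfolding \<mu>_def using bdd that by (intro cInf_lower) auto
  have "\<exists>x\<in>K. F x < \<mu> + 1 / real (Suc n)" for n
  proof -
    have "Inf (F ` K) < \<mu> + 1 / real (Suc n)" unfolding \<mu>_def by simp
    from cInf_lessD[OF _ this] K(3) show ?thesis by auto
  qed
  then obtain x where x: "\<And>n. x n \<in> K" "\<And>n. F (x n) < \<mu> + 1 / real (Suc n)" by metis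
  have mid: "(1/8) * (norm (a - b))\<^sup>2 \<le> (F a + F b)/2 - F ((1/2) *\<^sub>R (a + b))" if "a \<in> K" "b \<in> K" for a b
  proof -
    have "\<phi> ((1 - 1/2) *\<^sub>R a + (1/2) *\<^sub>R b) \<le> (1 - 1/2) * \<phi> a + (1/2) * \<phi> b"
      by (rule convex_onD[OF cv]) (use that in auto)
    moreover have "(1 - 1/2) *\<^sub>R a + (1/2) *\<^sub>R b = (1/2) *\<^sub>R (a + b)" by (simp add: algebra_simps)
    ultimately have "\<phi> ((1/2) *\<^sub>R (a + b)) \<le> (1/2) * \<phi> a + (1/2) * \<phi> b" by simp
    then show ?thesis unfolding F_def strong_mid by (simp add: field_simps)
  qed
  have midK: "(1/2) *\<^sub>R (a + b) \<in> K" if "a \<in> K" "b \<in> K" for a b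
  proof -
    have "(1 - 1/2) *\<^sub>R a + (1/2) *\<^sub>R b \<in> K" using convexD_alt[OF K(2) that, of "1/2"] by simp
    moreover have "(1 - 1/2) *\<^sub>R a + (1/2) *\<^sub>R b = (1/2) *\<^sub>R (a + b)" by (simp add: algebra_simps)
    ultimately show ?thesis by simp
  qed
  have cau: "Cauchy x"
  proof (rule metric_CauchyI)
    fix e :: real assume e: "e > 0"
    obtain N where N: "inverse (real (Suc N)) < e\<^sup>2 / 8" using reals_Archimedean[of "e\<^sup>2/8"] e by auto
    show "\<exists>M. \<forall>m\<ge>M. \<forall>n\<ge>M. dist (x m) (x n) < e"
    proof (intro exI allI impI)
      fix m n assume mn: "N \<le> m" "N \<le> n"
      have "(1/8) * (norm (x m - x n))\<^sup>2 \<le> (F (x m) + F (x n))/2 - F ((1/2) *\<^sub>R (x m + x n))"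
        using mid x(1) by blast
      also have "\<dots> \<le> (F (x m) + F (x n))/2 - \<mu>" using mule midK x(1) by (simp add: field_simps)
      also have "\<dots> \<le> (1 / real (Suc m) + 1 / real (Suc n)) / 2" using x(2)[of m] x(2)[of n] by argo
      also have "\<dots> \<le> inverse (real (Suc N))"
      proof -
        have "1 / real (Suc m) \<le> inverse (real (Suc N))" "1 / real (Suc n) \<le> inverse (real (Suc N))"
          using mn by (auto simp: field_simps)
        then show ?thesis by simp
      qed
      finally have "(norm (x m - x n))\<^sup>2 < e\<^sup>2" using N by simp
      then have "norm (x m - x n) < e" using e by (simp add: power_less_imp_less_base)
      then show "dist (x m) (x n) < e" by (simp add: dist_norm)
    qed
  qed
  then obtain p where p: "x \<longlonglongrightarrow> p" using Cauchy_convergent_iff convergent_def by blast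
  have pK: "p \<in> K" using closed_sequentially[OF K(1)] x(1) p by blast
  have contF: "continuous_on K F" unfolding F_def
    by (intro continuous_intros lipschitz_on_continuous_on[OF lip])
  have Fx: "(\<lambda>n. F (x n)) \<longlonglongrightarrow> F p"
    by (rule continuous_on_tendsto_compose[OF contF p pK]) (use x(1) in auto)
  have lim2: "(\<lambda>n. \<mu> + inverse (real (Suc n))) \<longlonglongrightarrow> \<mu> + 0"
    by (intro tendsto_add tendsto_const LIMSEQ_inverse_real_of_nat)
  have "F p \<le> \<mu> + 0"
    by (rule LIMSEQ_le[OF Fx lim2]) (use x(2) in \<open>auto simp: divide_inverse less_imp_le\<close>)
  hence Fmin: "F p \<le> F v" if "v \<in> K" for v using mule[OF that] by simp
  show ?thesis
  proof (intro bexI[OF _ pK] ballI)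
    fix v assume v: "v \<in> K"
    show "(p - z) \<bullet> (v - p) + \<phi> v - \<phi> p \<ge> 0"
    proof (rule small_param[where c = "(1/2) * (norm (v - p))\<^sup>2"])
      fix l :: real assume l: "0 < l" "l \<le> 1"
      have yK: "(1 - l) *\<^sub>R p + l *\<^sub>R v \<in> K" using convexD_alt[OF K(2) pK v, of l] l by simp
      have "\<phi> ((1 - l) *\<^sub>R p + l *\<^sub>R v) \<le> (1 - l) * \<phi> p + l * \<phi> v"
        by (rule convex_onD[OF cv]) (use l pK v in auto)
      moreover have "F p \<le> F ((1 - l) *\<^sub>R p + l *\<^sub>R v)" using Fmin[OF yK] .
      ultimately have "0 \<le> l * ((p - z) \<bullet> (v - p) + \<phi> v - \<phi> p + l * ((1/2) * (norm (v - p))\<^sup>2))"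
        unfolding F_def step_sq by (simp add: algebra_simps power2_eq_square)
      then show "(p - z) \<bullet> (v - p) + \<phi> v - \<phi> p + l * ((1/2) * (norm (v - p))\<^sup>2) \<ge> 0"
        using l by (simp add: zero_le_mult_iff)
    qed simp
  qed
qed



lemma cone_sep:
  fixes E :: "'h::{real_inner,complete_space} set"
  assumes E: "closed E" "convex E" "cone E" "E \<noteq> {}" and q: "q \<notin> E"
  shows "\<exists>d. (\<forall>e\<in>E. d \<bullet> e \<le> 0) \<and> d \<bullet> q > 0"
proof -
  obtain p where pE: "p \<in> E" and p: "\<And>v. v \<in> E \<Longrightarrow> (p - q) \<bullet> (v - p) + 0 - 0 \<ge> 0"
    using prox_exists[OF E(1,2,4), of "\<lambda>_. 0" 0 q] E(2) by (auto simp: convex_on_const lipschitz_on_constant)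
  have "0 \<in> E" using E(3,4) unfolding cone_def by (metis all_not_in_conv order_refl scale_zero_left)
  have "2 *\<^sub>R p \<in> E" using E(3) pE unfolding cone_def by auto
  from p[OF \<open>0 \<in> E\<close>] p[OF this] have pp: "(p - q) \<bullet> p = 0"
    by (simp add: inner_diff_right inner_scaleR_right algebra_simps)
  have "p \<noteq> q" using pE q by auto
  show ?thesis
  proof (intro exI conjI ballI)
    fix e assume "e \<in> E"
    from p[OF this] pp show "(q - p) \<bullet> e \<le> 0"
      by (simp add: inner_diff_right inner_diff_left inner_commute)
  next
    have "(q - p) \<bullet> q = (q - p) \<bullet> (q - p) + (q - p) \<bullet> p"
      by (simp add: inner_diff_right inner_diff_left inner_commute)
    also have "(q - p) \<bullet> p = 0" using pp by (metis inner_minus_left minus_diff_eq neg_equal_0_iff_equal)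
    then have "(q - p) \<bullet> (q - p) + (q - p) \<bullet> p = (q - p) \<bullet> (q - p)" by simp
    also have "\<dots> > 0" using \<open>p \<noteq> q\<close> by simp
    finally show "(q - p) \<bullet> q > 0" .
  qed
qed

lemma Cset_iff: "\<xi> \<in> Cset j K \<eta> \<longleftrightarrow> (\<forall>v\<in>K. \<xi> \<bullet> v \<le> j \<eta> v)"
  unfolding Cset_def Jext_def by (auto split: if_splits)

locale visetting =
  fixes A :: "'a::{real_inner,complete_space} \<Rightarrow> 'a"
    and K :: "'a set"
    and j :: "'b::{real_inner,complete_space} \<Rightarrow> 'a \<Rightarrow> real"
    and mA LA \<alpha>j :: real
  assumes K: "K \<noteq> {}" "closed K" "convex K" "cone K"
    and A_mon: "\<And>u v. (A u - A v) \<bullet> (u - v) \<ge> mA * (norm (u - v))\<^sup>2"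
    and A_lip: "\<And>u v. norm (A u - A v) \<le> LA * norm (u - v)"
    and mA: "mA > 0" and LA: "LA > 0"
    and j_convex: "\<And>\<eta>. convex_on K (j \<eta>)"
    and j_hom: "\<And>\<eta> c v. c > 0 \<Longrightarrow> v \<in> K \<Longrightarrow> j \<eta> (c *\<^sub>R v) = c * j \<eta> v"
    and j_lip: "\<And>\<eta>. \<exists>L. L-lipschitz_on K (j \<eta>)"
    and alpha: "\<alpha>j \<ge> 0"
    and j_ineq: "\<And>\<eta>1 \<eta>2 v1 v2. v1 \<in> K \<Longrightarrow> v2 \<in> K \<Longrightarrow>
        j \<eta>1 v2 - j \<eta>1 v1 + j \<eta>2 v1 - j \<eta>2 v2 \<le> \<alpha>j * norm (\<eta>1 - \<eta>2) * norm (v1 - v2)"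
begin

lemma zeroK: "0 \<in> K"
  using K(1,4) unfolding cone_def by (metis all_not_in_conv order_refl scale_zero_left)

lemma j0: "j \<eta> 0 = 0"
  using j_hom[of 2 0 \<eta>] zeroK by simp

lemma coneK: "v \<in> K \<Longrightarrow> c \<ge> 0 \<Longrightarrow> c *\<^sub>R v \<in> K"
  using K(4) unfolding cone_def by auto

lemma j_cont: "continuous_on K (j \<eta>)"
  using j_lip[of \<eta>] lipschitz_on_continuous_on by blast

definition "epi \<eta> = {(w, s). w \<in> K \<and> j \<eta> w \<le> s}"

lemma epi_closed: "closed (epi \<eta>)"
  unfolding closed_sequential_limits
proof (intro allI impI, elim conjE)
  fix x :: "nat \<Rightarrow> 'a \<times> real" and l assume xs: "\<forall>n. x n \<in> epi \<eta>" and xl: "x \<longlonglongrightarrow> l"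
  have a: "(\<lambda>n. fst (x n)) \<longlonglongrightarrow> fst l" and b: "(\<lambda>n. snd (x n)) \<longlonglongrightarrow> snd l"
    using xl by (auto intro: tendsto_fst tendsto_snd)
  have aK: "\<forall>n. fst (x n) \<in> K" "\<forall>n. j \<eta> (fst (x n)) \<le> snd (x n)" using xs unfolding epi_def by (metis (mono_tags, lifting) case_prodD mem_Collect_eq prod.collapse)+
  have lK: "fst l \<in> K" using closed_sequentially[OF K(2), of "\<lambda>n. fst (x n)"] aK(1) a by blast
  have "(\<lambda>n. j \<eta> (fst (x n))) \<longlonglongrightarrow> j \<eta> (fst l)"
    by (rule continuous_on_tendsto_compose[OF j_cont a lK]) (use aK in auto)
  hence "j \<eta> (fst l) \<le> snd l" using b aK(2) by (intro LIMSEQ_le) auto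
  then show "l \<in> epi \<eta>" using lK by (auto simp: epi_def split: prod.splits)
qed

lemma epi_convex: "convex (epi \<eta>)"
proof (rule convexI)
  fix x y :: "'a \<times> real" and u v :: real
  assume x: "x \<in> epi \<eta>" and y: "y \<in> epi \<eta>" and uv0: "0 \<le> u" "0 \<le> v" "u + v = 1"
  hence uv: "0 \<le> u \<and> 0 \<le> v \<and> u + v = 1" by simp
  obtain w1 s1 where x': "x = (w1, s1)" "w1 \<in> K" "j \<eta> w1 \<le> s1" using x by (auto simp: epi_def)
  obtain w2 s2 where y': "y = (w2, s2)" "w2 \<in> K" "j \<eta> w2 \<le> s2" using y by (auto simp: epi_def)
  have "j \<eta> (u *\<^sub>R w1 + v *\<^sub>R w2) \<le> u * j \<eta> w1 + v * j \<eta> w2"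
    using j_convex[of \<eta>] x' y' uv unfolding convex_on_def by blast
  also have "\<dots> \<le> u * s1 + v * s2" using uv x' y' by (intro add_mono mult_left_mono) auto
  finally have "j \<eta> (u *\<^sub>R w1 + v *\<^sub>R w2) \<le> u * s1 + v * s2" .
  moreover have "u *\<^sub>R w1 + v *\<^sub>R w2 \<in> K" using K(3) x' y' uv unfolding convex_def by blast
  ultimately show "u *\<^sub>R x + v *\<^sub>R y \<in> epi \<eta>" using x' y' by (simp add: epi_def)
qed

lemma epi_cone: "cone (epi \<eta>)"
  unfolding cone_def
proof (intro ballI allI impI)
  fix x :: "'a \<times> real" and c :: real assume x: "x \<in> epi \<eta>" and c: "0 \<le> c"
  obtain w s where x': "x = (w, s)" "w \<in> K" "j \<eta> w \<le> s" using x by (auto simp: epi_def)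
  show "c *\<^sub>R x \<in> epi \<eta>"
  proof (cases "c = 0")
    case True then show ?thesis using x' zeroK j0 by (simp add: epi_def)
  next
    case False
    then have "c > 0" using c by simp
    then have "j \<eta> (c *\<^sub>R w) \<le> c * s" using j_hom[of c w \<eta>] x' by (simp add: mult_left_mono)
    then show ?thesis using x' coneK[OF x'(2) c] by (simp add: epi_def)
  qed
qed

lemma sup_lemma:
  assumes u: "u \<in> K" and e: "e > 0"
  shows "\<exists>\<xi>\<in>Cset j K \<eta>. \<xi> \<bullet> u > j \<eta> u - e"
proof -
  have ne: "epi \<eta> \<noteq> {}" using zeroK j0 by (auto simp: epi_def)
  have "(u, j \<eta> u - e) \<notin> epi \<eta>" using e by (simp add: epi_def)
  from cone_sep[OF epi_closed epi_convex epi_cone ne this] obtain d where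
    d: "\<forall>x\<in>epi \<eta>. d \<bullet> x \<le> 0" "d \<bullet> (u, j \<eta> u - e) > 0" by blast
  obtain \<zeta> \<sigma> where dd: "d = (\<zeta>, \<sigma>)" by (cases d)
  have 1: "\<sigma> \<le> 0" using d(1)[rule_format, of "(0, 1)"] zeroK j0 by (simp add: epi_def dd)
  have 2: "\<zeta> \<bullet> u + \<sigma> * j \<eta> u \<le> 0" using d(1)[rule_format, of "(u, j \<eta> u)"] u by (simp add: epi_def dd)
  have 3: "\<zeta> \<bullet> u + \<sigma> * (j \<eta> u - e) > 0" using d(2) by (simp add: dd)
  have s: "\<sigma> < 0"
  proof -
    have "\<sigma> * e < 0" using 2 3 by (simp add: algebra_simps)
    then show ?thesis using e by (simp add: mult_less_0_iff)
  qed
  define \<xi> where "\<xi> = (- 1 / \<sigma>) *\<^sub>R \<zeta>"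
  show ?thesis
  proof (intro bexI)
    show "\<xi> \<in> Cset j K \<eta>" unfolding Cset_iff
    proof
      fix w assume w: "w \<in> K"
      have "\<zeta> \<bullet> w + \<sigma> * j \<eta> w \<le> 0" using d(1)[rule_format, of "(w, j \<eta> w)"] w by (simp add: epi_def dd)
      then show "\<xi> \<bullet> w \<le> j \<eta> w" using s unfolding \<xi>_def by (simp add: field_simps)
    qed
    show "\<xi> \<bullet> u > j \<eta> u - e" using 3 s unfolding \<xi>_def by (simp add: field_simps)
  qed
qed

lemma inK:
  assumes x0: "\<xi>0 \<in> Cset j K \<eta>" and le: "\<forall>\<xi>\<in>Cset j K \<eta>. u \<bullet> \<xi> \<le> u \<bullet> \<xi>0"
  shows "u \<in> K"
proof (rule ccontr)
  assume "u \<notin> K"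
  from cone_sep[OF K(2,3,4,1) this] obtain d where d: "\<forall>e\<in>K. d \<bullet> e \<le> 0" "d \<bullet> u > 0" by blast
  have "\<xi>0 + d \<in> Cset j K \<eta>" unfolding Cset_iff
  proof
    fix v assume v: "v \<in> K"
    have "\<xi>0 \<bullet> v \<le> j \<eta> v" "d \<bullet> v \<le> 0" using x0 d(1) v unfolding Cset_iff by auto
    then show "(\<xi>0 + d) \<bullet> v \<le> j \<eta> v" by (simp add: inner_add_left)
  qed
  from le[rule_format, OF this] d(2) show False by (simp add: inner_add_right inner_commute)
qed

lemma char:
  "- u \<in> normal_cone (Cset_t j K f \<eta> t) x \<longleftrightarrow>
    u \<in> K \<and> (\<forall>v\<in>K. (x - f t) \<bullet> (v - u) + j \<eta> v - j \<eta> u \<ge> 0)"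
proof -
  have mem: "x \<in> Cset_t j K f \<eta> t \<longleftrightarrow> f t - x \<in> Cset j K \<eta>"
    unfolding Cset_t_def by (auto simp: image_iff intro!: bexI[where x = "f t - x"])
  have "- u \<in> normal_cone (Cset_t j K f \<eta> t) x \<longleftrightarrow>
      f t - x \<in> Cset j K \<eta> \<and> (\<forall>\<xi>\<in>Cset j K \<eta>. u \<bullet> \<xi> \<le> u \<bullet> (f t - x))"
    unfolding normal_cone_def mem
    by (auto simp: Cset_t_def inner_diff_right inner_diff_left inner_commute algebra_simps)
  also have "\<dots> \<longleftrightarrow> u \<in> K \<and> (\<forall>v\<in>K. (x - f t) \<bullet> (v - u) + j \<eta> v - j \<eta> u \<ge> 0)"
  proof
    assume H: "f t - x \<in> Cset j K \<eta> \<and> (\<forall>\<xi>\<in>Cset j K \<eta>. u \<bullet> \<xi> \<le> u \<bullet> (f t - x))"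
    then have uK: "u \<in> K" using inK by blast
    have ge: "(f t - x) \<bullet> u \<ge> j \<eta> u"
    proof (rule field_le_epsilon[where x = "j \<eta> u" and y = "(f t - x) \<bullet> u", simplified])
      fix e :: real assume e: "e > 0"
      obtain \<xi> where "\<xi> \<in> Cset j K \<eta>" "\<xi> \<bullet> u > j \<eta> u - e" using sup_lemma[OF uK e] by blast
      with H have "j \<eta> u - e < u \<bullet> (f t - x)" by (auto simp: inner_commute)
      then show "j \<eta> u \<le> (f t - x) \<bullet> u + e" by (simp add: inner_commute)
    qed
    show "u \<in> K \<and> (\<forall>v\<in>K. (x - f t) \<bullet> (v - u) + j \<eta> v - j \<eta> u \<ge> 0)"
    proof (intro conjI ballI uK)
      fix v assume v: "v \<in> K"
      have "(f t - x) \<bullet> v \<le> j \<eta> v" using H v unfolding Cset_iff by blast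
      then show "(x - f t) \<bullet> (v - u) + j \<eta> v - j \<eta> u \<ge> 0" using ge
        by (simp add: inner_diff_right inner_diff_left algebra_simps)
    qed
  next
    assume H: "u \<in> K \<and> (\<forall>v\<in>K. (x - f t) \<bullet> (v - u) + j \<eta> v - j \<eta> u \<ge> 0)"
    have 0: "(x - f t) \<bullet> (0 - u) + j \<eta> 0 - j \<eta> u \<ge> 0" using H zeroK by blast
    have "2 *\<^sub>R u \<in> K" using H coneK by simp
    then have 2: "(x - f t) \<bullet> (2 *\<^sub>R u - u) + j \<eta> (2 *\<^sub>R u) - j \<eta> u \<ge> 0" using H by blast
    have eq: "(f t - x) \<bullet> u = j \<eta> u" using 0 2 j0 j_hom[of 2 u \<eta>] H
      by (simp add: inner_diff_right inner_diff_left inner_scaleR_right algebra_simps)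
    have C: "f t - x \<in> Cset j K \<eta>" unfolding Cset_iff
    proof
      fix v assume v: "v \<in> K"
      then have "(x - f t) \<bullet> (v - u) + j \<eta> v - j \<eta> u \<ge> 0" using H by blast
      then show "(f t - x) \<bullet> v \<le> j \<eta> v" using eq
        by (simp add: inner_diff_right inner_diff_left algebra_simps)
    qed
    show "f t - x \<in> Cset j K \<eta> \<and> (\<forall>\<xi>\<in>Cset j K \<eta>. u \<bullet> \<xi> \<le> u \<bullet> (f t - x))"
    proof (intro conjI C ballI)
      fix \<xi> assume "\<xi> \<in> Cset j K \<eta>"
      then have "\<xi> \<bullet> u \<le> j \<eta> u" using H unfolding Cset_iff by blast
      then show "u \<bullet> \<xi> \<le> u \<bullet> (f t - x)" using eq by (simp add: inner_commute)
    qed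
  qed
  finally show ?thesis .
qed

end


context visetting begin

definition VI :: "'b \<Rightarrow> 'a \<Rightarrow> 'a \<Rightarrow> bool" where
  "VI \<eta> g u \<longleftrightarrow> u \<in> K \<and> (\<forall>v\<in>K. (A u - g) \<bullet> (v - u) + j \<eta> v - j \<eta> u \<ge> 0)"

lemma vi_est:
  assumes 1: "VI \<eta>1 g1 u1" and 2: "VI \<eta>2 g2 u2"
  shows "mA * norm (u1 - u2) \<le> norm (g1 - g2) + \<alpha>j * norm (\<eta>1 - \<eta>2)"
proof -
  define d where "d = u1 - u2"
  have K12: "u1 \<in> K" "u2 \<in> K" using 1 2 by (auto simp: VI_def)
  have a: "(A u1 - g1) \<bullet> (u2 - u1) + j \<eta>1 u2 - j \<eta>1 u1 \<ge> 0" using 1 K12 by (auto simp: VI_def)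
  have b: "(A u2 - g2) \<bullet> (u1 - u2) + j \<eta>2 u1 - j \<eta>2 u2 \<ge> 0" using 2 K12 by (auto simp: VI_def)
  have c: "j \<eta>1 u2 - j \<eta>1 u1 + j \<eta>2 u1 - j \<eta>2 u2 \<le> \<alpha>j * norm (\<eta>1 - \<eta>2) * norm d"
    using j_ineq[OF K12] unfolding d_def .
  have e: "(A u1 - g1) \<bullet> (u2 - u1) + (A u2 - g2) \<bullet> (u1 - u2) = (g1 - g2) \<bullet> d - (A u1 - A u2) \<bullet> d"
    unfolding d_def by (simp add: inner_diff_left inner_diff_right algebra_simps)
  have m: "(A u1 - A u2) \<bullet> d \<ge> mA * (norm d)\<^sup>2" using A_mon unfolding d_def .
  have cs: "(g1 - g2) \<bullet> d \<le> norm (g1 - g2) * norm d" by (rule norm_cauchy_schwarz)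
  have "mA * (norm d)\<^sup>2 \<le> (norm (g1 - g2) + \<alpha>j * norm (\<eta>1 - \<eta>2)) * norm d"
    using a b c e m cs by (simp add: algebra_simps)
  then have "norm d * (mA * norm d) \<le> norm d * (norm (g1 - g2) + \<alpha>j * norm (\<eta>1 - \<eta>2))"
    by (simp add: power2_eq_square algebra_simps)
  moreover have "norm (g1 - g2) + \<alpha>j * norm (\<eta>1 - \<eta>2) \<ge> 0" using alpha by simp
  ultimately show ?thesis unfolding d_def
    by (cases "norm (u1 - u2) = 0") (auto simp: mult_le_cancel_left)
qed

lemma vi_unique: "VI \<eta> g u1 \<Longrightarrow> VI \<eta> g u2 \<Longrightarrow> u1 = u2"
  using vi_est[of \<eta> g u1 \<eta> g u2] mA by (simp add: mult_le_0_iff)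

lemma vi_exists: "\<exists>u. VI \<eta> g u"
proof -
  obtain Lj where Lj: "Lj-lipschitz_on K (j \<eta>)" using j_lip by blast
  define \<rho> where "\<rho> = mA / LA\<^sup>2"
  have \<rho>: "\<rho> > 0" using mA LA by (simp add: \<rho>_def)
  define \<phi> where "\<phi> v = \<rho> * j \<eta> v" for v
  have cv: "convex_on K \<phi>" unfolding \<phi>_def using \<rho> j_convex by (intro convex_on_cmul) auto
  have lp: "(\<rho> * Lj)-lipschitz_on K \<phi>" unfolding \<phi>_def using \<rho> by (intro lipschitz_on_cmult_real_nonneg Lj) auto
  define P where "P z = (SOME p. p \<in> K \<and> (\<forall>v\<in>K. (p - z) \<bullet> (v - p) + \<phi> v - \<phi> p \<ge> 0))" for z
  have PK: "P z \<in> K \<and> (\<forall>v\<in>K. (P z - z) \<bullet> (v - P z) + \<phi> v - \<phi> (P z) \<ge> 0)" for z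
    unfolding P_def by (rule someI_ex) (use prox_exists[OF K(2,3,1) cv lp, of z] in blast)
  have Pne: "norm (P z1 - P z2) \<le> norm (z1 - z2)" for z1 z2
  proof -
    define p1 p2 where "p1 = P z1" "p2 = P z2"
    have a: "(p1 - z1) \<bullet> (p2 - p1) + \<phi> p2 - \<phi> p1 \<ge> 0" using PK[of z1] PK[of z2] unfolding p1_p2_def by blast
    have b: "(p2 - z2) \<bullet> (p1 - p2) + \<phi> p1 - \<phi> p2 \<ge> 0" using PK[of z1] PK[of z2] unfolding p1_p2_def by blast
    have "(norm (p1 - p2))\<^sup>2 \<le> (z1 - z2) \<bullet> (p1 - p2)"
      using a b unfolding power2_norm_eq_inner by (simp add: inner_diff_left inner_diff_right algebra_simps)
    also have "\<dots> \<le> norm (z1 - z2) * norm (p1 - p2)" by (rule norm_cauchy_schwarz)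
    finally have "norm (p1 - p2) * norm (p1 - p2) \<le> norm (p1 - p2) * norm (z1 - z2)"
      by (simp add: power2_eq_square mult.commute)
    then show ?thesis unfolding p1_p2_def
      by (cases "norm (P z1 - P z2) = 0") (auto simp: mult_le_cancel_left)
  qed
  define T where "T z = P (z - \<rho> *\<^sub>R (A z - g))" for z
  define k where "k = sqrt (max 0 (1 - mA\<^sup>2 / LA\<^sup>2))"
  have k0: "0 \<le> k" unfolding k_def by simp
  have k1: "k < 1"
  proof -
    have "mA\<^sup>2 / LA\<^sup>2 > 0" using mA LA by simp
    then have "max 0 (1 - mA\<^sup>2 / LA\<^sup>2) < 1" by simp
    then show ?thesis unfolding k_def by simp
  qed
  have contr: "dist (T z1) (T z2) \<le> k * dist z1 z2" for z1 z2
  proof -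
    define a b where "a = z1 - z2" "b = A z1 - A z2"
    have ab: "b \<bullet> a \<ge> mA * (norm a)\<^sup>2" using A_mon unfolding a_b_def .
    have bn: "norm b \<le> LA * norm a" using A_lip unfolding a_b_def .
    have bn2: "(norm b)\<^sup>2 \<le> LA\<^sup>2 * (norm a)\<^sup>2"
      using bn by (metis norm_ge_zero power_mono power_mult_distrib)
    have eq: "(z1 - \<rho> *\<^sub>R (A z1 - g)) - (z2 - \<rho> *\<^sub>R (A z2 - g)) = a - \<rho> *\<^sub>R b"
      unfolding a_b_def by (simp add: algebra_simps)
    have "(norm (a - \<rho> *\<^sub>R b))\<^sup>2 = (norm a)\<^sup>2 - 2 * \<rho> * (b \<bullet> a) + \<rho>\<^sup>2 * (norm b)\<^sup>2"
      unfolding power2_norm_eq_inner by (simp add: inner_diff_left inner_diff_right inner_commute algebra_simps power2_eq_square)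
    also have "\<dots> \<le> (norm a)\<^sup>2 - 2 * \<rho> * (mA * (norm a)\<^sup>2) + \<rho>\<^sup>2 * (LA\<^sup>2 * (norm a)\<^sup>2)"
    proof -
      have "2 * \<rho> * (mA * (norm a)\<^sup>2) \<le> 2 * \<rho> * (b \<bullet> a)" using ab \<rho> by (intro mult_left_mono) auto
      moreover have "\<rho>\<^sup>2 * (norm b)\<^sup>2 \<le> \<rho>\<^sup>2 * (LA\<^sup>2 * (norm a)\<^sup>2)" using bn2 by (intro mult_left_mono) auto
      ultimately show ?thesis by linarith
    qed
    also have "\<dots> = (1 - mA\<^sup>2 / LA\<^sup>2) * (norm a)\<^sup>2"
      unfolding \<rho>_def using LA by (simp add: field_simps power2_eq_square)
    also have "\<dots> \<le> k\<^sup>2 * (norm a)\<^sup>2" unfolding k_def by (intro mult_right_mono) auto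
    also have "\<dots> = (k * norm a)\<^sup>2" by (simp add: power_mult_distrib)
    finally have sq: "(norm (a - \<rho> *\<^sub>R b))\<^sup>2 \<le> (k * norm a)\<^sup>2" .
    have "0 \<le> k * norm a" using k0 by simp
    with sq have "norm (a - \<rho> *\<^sub>R b) \<le> k * norm a" by (rule power2_le_imp_le)
    then have "norm (T z1 - T z2) \<le> k * norm a"
      using Pne[of "z1 - \<rho> *\<^sub>R (A z1 - g)" "z2 - \<rho> *\<^sub>R (A z2 - g)"] eq unfolding T_def by simp
    then show ?thesis unfolding a_b_def by (simp add: dist_norm)
  qed
  have "\<exists>!x\<in>K. T x = x"
    by (rule Banach_fix[OF _ K(1) k0 k1]) (use K(2) complete_eq_closed PK contr in \<open>auto simp: T_def\<close>)
  then obtain u where u: "u \<in> K" "T u = u" by blast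
  have "\<forall>v\<in>K. (u - (u - \<rho> *\<^sub>R (A u - g))) \<bullet> (v - u) + \<phi> v - \<phi> u \<ge> 0"
    using PK[of "u - \<rho> *\<^sub>R (A u - g)"] u(2) unfolding T_def by simp
  then have "\<forall>v\<in>K. \<rho> * ((A u - g) \<bullet> (v - u) + j \<eta> v - j \<eta> u) \<ge> 0"
    unfolding \<phi>_def by (simp add: algebra_simps)
  then have "VI \<eta> g u" using u(1) \<rho> unfolding VI_def by (simp add: zero_le_mult_iff)
  then show ?thesis by blast
qed

definition sol :: "'b \<Rightarrow> 'a \<Rightarrow> 'a" where "sol \<eta> g = (THE u. VI \<eta> g u)"

lemma sol_VI: "VI \<eta> g (sol \<eta> g)"
  unfolding sol_def using vi_exists vi_unique by (metis theI)

lemma sol_eq: "VI \<eta> g u \<Longrightarrow> sol \<eta> g = u"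
  using sol_VI vi_unique by blast

lemma sol_lip: "norm (sol \<eta>1 g1 - sol \<eta>2 g2) \<le> (norm (g1 - g2) + \<alpha>j * norm (\<eta>1 - \<eta>2)) / mA"
  using vi_est[OF sol_VI sol_VI] mA by (simp add: field_simps)

end


lemma exp_int:
  fixes c t B :: real assumes c: "c > 0" and t: "t \<ge> 0"
  shows "((\<lambda>s. B * exp (2*c* s)) has_integral (B * (exp (2*c*t) - 1) / (2*c))) {0..t}"
proof -
  have "((\<lambda>s. B * exp (2*c* s)) has_integral (B * exp (2*c*t) / (2*c) - B * exp (2*c*0) / (2*c))) {0..t}"
  proof (rule fundamental_theorem_of_calculus[OF t])
    fix x assume "x \<in> {0..t}"
    have "((\<lambda>s. B * exp (2*c* s) / (2*c)) has_real_derivative B * exp (2*c*x)) (at x within {0..t})"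
      using c by (auto intro!: derivative_eq_intros)
    then show "((\<lambda>s. B * exp (2*c* s) / (2*c)) has_vector_derivative B * exp (2*c*x)) (at x within {0..t})"
      by (simp add: has_real_derivative_iff_has_vector_derivative)
  qed
  then show ?thesis by (simp add: diff_divide_distrib right_diff_distrib)
qed

lemma gron_step:
  fixes \<psi> :: "real \<Rightarrow> real"
  assumes c: "c > 0" and t: "t \<ge> 0" and cont: "continuous_on {0..t} \<psi>"
    and le: "\<And>s. s \<in> {0..t} \<Longrightarrow> \<psi> s \<le> B * exp (2*c* s)" and B: "B \<ge> 0"
  shows "c * integral {0..t} \<psi> \<le> B / 2 * exp (2*c*t)"
proof -
  have "integral {0..t} \<psi> \<le> integral {0..t} (\<lambda>s. B * exp (2*c* s))"
    using le by (intro integral_le integrable_continuous_interval cont) (auto intro!: continuous_intros)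
  also have "\<dots> = B * (exp (2*c*t) - 1) / (2*c)" using exp_int[OF c t] by (rule integral_unique)
  finally have i1: "integral {0..t} \<psi> \<le> B * (exp (2*c*t) - 1) / (2*c)" .
  have "c * integral {0..t} \<psi> \<le> c * (B * (exp (2*c*t) - 1) / (2*c))" using mult_left_mono[OF i1, of c] c by simp
  also have "\<dots> = B/2 * (exp (2*c*t) - 1)" using c by simp
  also have "\<dots> \<le> B/2 * exp (2*c*t)" using B by (simp add: algebra_simps)
  finally show ?thesis .
qed

lemma Ifacts:
  assumes I: "(T > 0 \<and> I = {0..T}) \<or> I = {(0::real)..}"
  shows "closed I" "\<And>t. t \<in> I \<Longrightarrow> {0..t} \<subseteq> I" "\<And>t. t \<in> I \<Longrightarrow> 0 \<le> t"
  using I by auto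

lemma gron_iter:
  fixes \<psi> :: "nat \<Rightarrow> real \<Rightarrow> real"
  assumes I: "(T > 0 \<and> I = {0..T}) \<or> I = {(0::real)..}" and c: "c > 0" and M: "M \<ge> 0"
    and cont: "\<And>k. continuous_on I (\<psi> k)"
    and base: "\<And>t. t \<in> I \<inter> {0..b} \<Longrightarrow> \<psi> 0 t \<le> M"
    and step: "\<And>k t. t \<in> I \<inter> {0..b} \<Longrightarrow> \<psi> (Suc k) t \<le> c * integral {0..t} (\<psi> k)"
  shows "t \<in> I \<inter> {0..b} \<Longrightarrow> \<psi> k t \<le> M * exp (2*c*t) * (1/2)^k"
proof (induction k arbitrary: t)
  case 0
  then have "t \<ge> 0" by auto
  then have "exp (2*c*t) \<ge> 1" using c by simp
  then have "M \<le> M * exp (2*c*t)" using M by (metis mult_left_mono mult.right_neutral)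
  then show ?case using base[OF 0] by simp
next
  case (Suc k)
  have t: "t \<in> I" using Suc.prems by auto
  have t0: "t \<ge> 0" using Ifacts(3)[OF I t] .
  have sub: "{0..t} \<subseteq> I \<inter> {0..b}" using Ifacts(2)[OF I t] Suc.prems by auto
  have "\<psi> (Suc k) t \<le> c * integral {0..t} (\<psi> k)" using step Suc.prems by blast
  also have "\<dots> \<le> (M * (1/2)^k) / 2 * exp (2*c*t)"
  proof (rule gron_step[OF c t0])
    show "continuous_on {0..t} (\<psi> k)" using continuous_on_subset[OF cont] sub by blast
    fix s assume "s \<in> {0..t}"
    then have "s \<in> I \<inter> {0..b}" using sub by blast
    from Suc.IH[OF this] show "\<psi> k s \<le> M * (1/2)^k * exp (2*c* s)" by (simp add: ac_simps)
  qed (use M in simp)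
  also have "\<dots> = M * exp (2*c*t) * (1/2)^Suc k" by simp
  finally show ?case .
qed

lemma geo_sum:
  assumes "m \<le> n"
  shows "(\<Sum>i=m..<n. (1/2::real)^i) = 2 * ((1/2)^m - (1/2)^n)"
  using assms
proof (induction rule: dec_induct)
  case base then show ?case by simp
next
  case (step n) then show ?case by simp
qed

lemma hist_fix:
  fixes \<Lambda> :: "(real \<Rightarrow> 'a::{real_inner,complete_space}) \<Rightarrow> real \<Rightarrow> 'a"
  assumes I: "(T > 0 \<and> I = {0..T}) \<or> I = {(0::real)..}"
    and cont: "\<And>w. continuous_on I w \<Longrightarrow> continuous_on I (\<Lambda> w)"
    and hd: "\<And>J. compact J \<Longrightarrow> J \<subseteq> I \<Longrightarrow> \<exists>c>0. \<forall>w w'. continuous_on I w \<and> continuous_on I w' \<longrightarrow>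
               (\<forall>t\<in>J. norm (\<Lambda> w t - \<Lambda> w' t) \<le> c * integral {0..t} (\<lambda>s. norm (w s - w' s)))"
  shows "\<exists>u. continuous_on I u \<and> (\<forall>t\<in>I. \<Lambda> u t = u t) \<and>
           (\<forall>v. continuous_on I v \<and> (\<forall>t\<in>I. \<Lambda> v t = v t) \<longrightarrow> (\<forall>t\<in>I. v t = u t))"
proof -
  have Jc: "compact (I \<inter> {0..b})" "I \<inter> {0..b} \<subseteq> I" for b
    using closed_Int_compact[OF Ifacts(1)[OF I], of "{0..b}"] by auto
  define w where "w k = (\<Lambda> ^^ k) (\<lambda>_. 0)" for k
  have wS: "w (Suc k) = \<Lambda> (w k)" for k by (simp add: w_def)
  have wc: "continuous_on I (w k)" for k
    by (induction k) (auto simp: w_def intro: cont)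
  have bound: "\<exists>B\<ge>0. \<forall>k. \<forall>t\<in>I\<inter>{0..b}. norm (w (Suc k) t - w k t) \<le> B * (1/2)^k" for b
  proof -
    obtain c where c: "c > 0" and H: "\<forall>w w'. continuous_on I w \<and> continuous_on I w' \<longrightarrow>
               (\<forall>t\<in>I\<inter>{0..b}. norm (\<Lambda> w t - \<Lambda> w' t) \<le> c * integral {0..t} (\<lambda>s. norm (w s - w' s)))"
      using hd[OF Jc] by blast
    have "compact ((\<lambda>t. w 1 t - w 0 t) ` (I\<inter>{0..b}))"
      by (intro compact_continuous_image continuous_on_subset[OF _ Jc(2)] continuous_intros wc Jc(1))
    then obtain M0 where M0: "M0 > 0" "\<forall>x\<in>(\<lambda>t. w 1 t - w 0 t) ` (I\<inter>{0..b}). norm x \<le> M0"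
      using compact_imp_bounded bounded_pos by metis
    have gi: "norm (w (Suc k) t - w k t) \<le> M0 * exp (2*c*t) * (1/2)^k" if t: "t \<in> I\<inter>{0..b}" for k t
    proof (rule gron_iter[OF I c _ _ _ _ t, where \<psi> = "\<lambda>k t. norm (w (Suc k) t - w k t)"])
      show "0 \<le> M0" using M0 by simp
      show "continuous_on I (\<lambda>t. norm (w (Suc k) t - w k t))" for k by (intro continuous_intros wc)
      show "norm (w (Suc 0) t - w 0 t) \<le> M0" if "t \<in> I\<inter>{0..b}" for t
      proof -
        have "w 1 t - w 0 t \<in> (\<lambda>t. w 1 t - w 0 t) ` (I\<inter>{0..b})" using that by (rule imageI)
        then have "norm (w 1 t - w 0 t) \<le> M0" using M0(2) by blast
        then show ?thesis by (simp add: One_nat_def)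
      qed
      show "norm (w (Suc (Suc k)) t - w (Suc k) t) \<le> c * integral {0..t} (\<lambda>t. norm (w (Suc k) t - w k t))"
        if "t \<in> I\<inter>{0..b}" for k t
      proof -
        have "norm (\<Lambda> (w (Suc k)) t - \<Lambda> (w k) t) \<le> c * integral {0..t} (\<lambda>t. norm (w (Suc k) t - w k t))"
          using H[rule_format, of "w (Suc k)" "w k", OF conjI[OF wc wc] that] .
        then show ?thesis by (simp only: wS)
      qed
    qed
    show ?thesis
    proof (intro exI[of _ "M0 * exp (2*c*b)"] conjI allI ballI)
      show "0 \<le> M0 * exp (2*c*b)" using M0 by simp
      fix k t assume t: "t \<in> I\<inter>{0..b}"
      have "exp (2*c*t) \<le> exp (2*c*b)" using t c by auto
      then have "M0 * exp (2*c*t) * (1/2)^k \<le> M0 * exp (2*c*b) * (1/2)^k"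
        using M0 by (intro mult_right_mono mult_left_mono) auto
      then show "norm (w (Suc k) t - w k t) \<le> M0 * exp (2*c*b) * (1/2)^k" using gi[OF t, of k] by linarith
    qed
  qed
  define u where "u t = lim (\<lambda>n. w n t)" for t
  have ulim: "uniform_limit (I\<inter>{0..b}) w u sequentially" for b
  proof -
    obtain B where B: "B \<ge> 0" "\<And>k t. t\<in>I\<inter>{0..b} \<Longrightarrow> norm (w (Suc k) t - w k t) \<le> B * (1/2)^k"
      using bound[of b] by blast
    have cb: "norm (w n t - w m t) \<le> 2 * B * (1/2)^m" if "m \<le> n" "t \<in> I\<inter>{0..b}" for m n t
    proof -
      have "w n t - w m t = (\<Sum>i=m..<n. w (Suc i) t - w i t)"
        using sum_Suc_diff'[OF that(1), of "\<lambda>i. w i t"] by simp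
      also have "norm \<dots> \<le> (\<Sum>i=m..<n. norm (w (Suc i) t - w i t))" by (rule norm_sum)
      also have "\<dots> \<le> (\<Sum>i=m..<n. B * (1/2)^i)" using B(2)[OF that(2)] by (intro sum_mono) auto
      also have "\<dots> = B * (2 * ((1/2)^m - (1/2)^n))" using geo_sum[OF that(1)] by (simp add: sum_distrib_left[symmetric])
      also have "\<dots> \<le> 2 * B * (1/2)^m" using B(1) by (simp add: algebra_simps)
      finally show ?thesis .
    qed
    have small: "\<exists>N. 2 * B * (1/2)^N < e" if "e > 0" for e
    proof -
      have "(\<lambda>N. 2 * B * (1/2::real)^N) \<longlonglongrightarrow> 2 * B * 0"
        by (intro tendsto_mult tendsto_const LIMSEQ_power_zero) auto
      then have "eventually (\<lambda>N. 2 * B * (1/2::real)^N < e) sequentially"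
        using that by (simp add: order_tendstoD(2))
      then show ?thesis by (auto simp: eventually_sequentially)
    qed
    have mono: "2 * B * (1/2::real)^n \<le> 2 * B * (1/2)^m" if "m \<le> n" for m n
      using B(1) that by (intro mult_left_mono power_decreasing) auto
    have conv: "(\<lambda>n. w n t) \<longlonglongrightarrow> u t" if t: "t \<in> I\<inter>{0..b}" for t
    proof -
      have "Cauchy (\<lambda>n. w n t)"
      proof (rule CauchyI)
        fix e :: real assume "e > 0"
        then obtain N where N: "2 * B * (1/2)^N < e" using small by blast
        show "\<exists>M. \<forall>m\<ge>M. \<forall>n\<ge>M. norm (w m t - w n t) < e"
        proof (intro exI allI impI)
          fix m n assume mn: "N \<le> m" "N \<le> n"
          show "norm (w m t - w n t) < e"
          proof (cases "m \<le> n")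
            case True
            then have "norm (w m t - w n t) \<le> 2 * B * (1/2)^m" using cb[OF True t] by (simp add: norm_minus_commute)
            also have "\<dots> \<le> 2 * B * (1/2)^N" using mono mn by blast
            finally show ?thesis using N by linarith
          next
            case False
            then have "norm (w m t - w n t) \<le> 2 * B * (1/2)^n" using cb[of n m t] t by simp
            also have "\<dots> \<le> 2 * B * (1/2)^N" using mono mn by blast
            finally show ?thesis using N by linarith
          qed
        qed
      qed
      then show ?thesis unfolding u_def by (simp add: Cauchy_convergent_iff convergent_LIMSEQ_iff)
    qed
    have tail: "norm (u t - w m t) \<le> 2 * B * (1/2)^m" if t: "t \<in> I\<inter>{0..b}" for m t
    proof (rule LIMSEQ_le_const2)
      show "(\<lambda>n. norm (w n t - w m t)) \<longlonglongrightarrow> norm (u t - w m t)"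
        by (intro tendsto_intros conv t)
      show "\<exists>N. \<forall>n\<ge>N. norm (w n t - w m t) \<le> 2 * B * (1/2)^m" using cb t by blast
    qed
    show ?thesis
    proof (rule uniform_limitI)
      fix e :: real assume "e > 0"
      then obtain N where N: "2 * B * (1/2)^N < e" using small by blast
      show "\<forall>\<^sub>F n in sequentially. \<forall>t\<in>I\<inter>{0..b}. dist (w n t) (u t) < e"
        unfolding eventually_sequentially
      proof (intro exI allI impI ballI)
        fix n t assume n: "N \<le> n" and t: "t \<in> I\<inter>{0..b}"
        have "dist (w n t) (u t) \<le> 2 * B * (1/2)^n" using tail[OF t] by (simp add: dist_norm norm_minus_commute)
        also have "\<dots> \<le> 2 * B * (1/2)^N" using mono n by blast
        finally show "dist (w n t) (u t) < e" using N by linarith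
      qed
    qed
  qed
  have ucont: "continuous_on (I\<inter>{0..b}) u" for b
    by (rule uniform_limit_theorem[OF _ ulim[of b]])
       (use wc continuous_on_subset[OF _ Jc(2)] in \<open>auto intro: always_eventually\<close>)
  have ucI: "continuous_on I u"
    unfolding continuous_on_eq_continuous_within
  proof
    fix t assume t: "t \<in> I"
    have "continuous (at t within I\<inter>{0..t+1}) u"
      using ucont[of "t+1"] t Ifacts(3)[OF I t] unfolding continuous_on_eq_continuous_within by auto
    moreover have "at t within I = at t within I\<inter>{0..t+1}"
      by (rule at_within_nhd[of _ "{..<t+1}"]) (use t Ifacts(3)[OF I] in auto)
    ultimately show "continuous (at t within I) u" by simp
  qed
  have fixpt: "\<Lambda> u t = u t" if t: "t \<in> I" for t
  proof -
    have t0: "0 \<le> t" using Ifacts(3)[OF I t] .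
    have tJ: "t \<in> I\<inter>{0..t}" using t t0 by auto
    have sub: "{0..t} \<subseteq> I\<inter>{0..t}" using Ifacts(2)[OF I t] by auto
    obtain c where c: "c > 0" and H: "\<forall>w w'. continuous_on I w \<and> continuous_on I w' \<longrightarrow>
               (\<forall>t\<in>I\<inter>{0..t}. norm (\<Lambda> w t - \<Lambda> w' t) \<le> c * integral {0..t} (\<lambda>s. norm (w s - w' s)))"
      using hd[OF Jc] by blast
    have l1: "(\<lambda>n. w (Suc n) t) \<longlonglongrightarrow> u t"
      using tendsto_uniform_limitI[OF ulim tJ] by (rule LIMSEQ_Suc)
    have l2: "(\<lambda>n. \<Lambda> (w n) t) \<longlonglongrightarrow> \<Lambda> u t"
      unfolding tendsto_iff
    proof (intro allI impI)
      fix e :: real assume e: "e > 0"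
      define e' where "e' = e / (c * t + 1)"
      have ct: "c * t \<ge> 0" using c t0 by simp
      have e': "e' > 0" unfolding e'_def using e ct by simp
      have ce: "c * (t * e') < e"
      proof -
        have "c * (t * e') = e * ((c * t) / (c * t + 1))" unfolding e'_def using ct by (simp add: field_simps)
        also have "\<dots> < e * 1" using e ct by (intro mult_strict_left_mono) auto
        finally show ?thesis by simp
      qed
      show "\<forall>\<^sub>F n in sequentially. dist (\<Lambda> (w n) t) (\<Lambda> u t) < e"
        using uniform_limitD[OF ulim[of t] e']
      proof (rule eventually_mono)
        fix n assume n: "\<forall>s\<in>I\<inter>{0..t}. dist (w n s) (u s) < e'"
        have "dist (\<Lambda> (w n) t) (\<Lambda> u t) \<le> c * integral {0..t} (\<lambda>s. norm (w n s - u s))"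
          using H[rule_format, of "w n" u, OF conjI[OF wc ucI] tJ] by (simp add: dist_norm)
        also have "integral {0..t} (\<lambda>s. norm (w n s - u s)) \<le> integral {0..t} (\<lambda>s. e')"
        proof (rule integral_le)
          show "(\<lambda>s. norm (w n s - u s)) integrable_on {0..t}"
            using sub by (intro integrable_continuous_interval continuous_intros continuous_on_subset[OF wc] continuous_on_subset[OF ucI]) auto
          show "(\<lambda>s. e') integrable_on {0..t}" by (intro integrable_continuous_interval continuous_intros)
          fix s assume "s \<in> {0..t}"
          then have "s \<in> I\<inter>{0..t}" using sub by blast
          then have "dist (w n s) (u s) < e'" using n by blast
          then show "norm (w n s - u s) \<le> e'" by (simp add: dist_norm)
        qed
        then have "c * integral {0..t} (\<lambda>s. norm (w n s - u s)) \<le> c * (t * e')"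
          using c t0 by (simp add: mult_left_mono)
        finally show "dist (\<Lambda> (w n) t) (\<Lambda> u t) < e" using ce by linarith
      qed
    qed
    have "(\<lambda>n. w (Suc n) t) \<longlonglongrightarrow> \<Lambda> u t" using l2 unfolding wS .
    then show ?thesis using l1 LIMSEQ_unique by blast
  qed
  have uniq: "v t = u t" if v: "continuous_on I v" "\<forall>t\<in>I. \<Lambda> v t = v t" and t: "t \<in> I" for v t
  proof -
    have t0: "0 \<le> t" using Ifacts(3)[OF I t] .
    have tJ: "t \<in> I\<inter>{0..t}" using t t0 by auto
    obtain c where c: "c > 0" and H: "\<forall>w w'. continuous_on I w \<and> continuous_on I w' \<longrightarrow>
               (\<forall>s\<in>I\<inter>{0..t}. norm (\<Lambda> w s - \<Lambda> w' s) \<le> c * integral {0..s} (\<lambda>r. norm (w r - w' r)))"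
      using hd[OF Jc] by blast
    have "compact ((\<lambda>s. u s - v s) ` (I\<inter>{0..t}))"
      by (intro compact_continuous_image continuous_on_subset[OF _ Jc(2)] continuous_intros ucI v(1) Jc(1))
    then obtain M where M: "M > 0" "\<forall>x\<in>(\<lambda>s. u s - v s) ` (I\<inter>{0..t}). norm x \<le> M"
      using compact_imp_bounded bounded_pos by metis
    have gi: "norm (u t - v t) \<le> M * exp (2*c*t) * (1/2)^k" for k
    proof (rule gron_iter[OF I c _ _ _ _ tJ, where \<psi> = "\<lambda>k s. norm (u s - v s)"])
      show "0 \<le> M" using M by simp
      show "continuous_on I (\<lambda>s. norm (u s - v s))" for k by (intro continuous_intros ucI v(1))
      show "norm (u s - v s) \<le> M" if "s \<in> I\<inter>{0..t}" for s using M(2) that by auto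
      show "norm (u s - v s) \<le> c * integral {0..s} (\<lambda>s. norm (u s - v s))" if s: "s \<in> I\<inter>{0..t}" for k s
      proof -
        have "norm (u s - v s) = norm (\<Lambda> u s - \<Lambda> v s)" using fixpt v(2) s by auto
        also have "\<dots> \<le> c * integral {0..s} (\<lambda>s. norm (u s - v s))" using H[rule_format, of u v, OF conjI[OF ucI v(1)] s] .
        finally show ?thesis .
      qed
    qed
    have "(\<lambda>k. M * exp (2*c*t) * (1/2::real)^k) \<longlonglongrightarrow> M * exp (2*c*t) * 0"
      by (intro tendsto_mult tendsto_const LIMSEQ_power_zero) auto
    then have "norm (u t - v t) \<le> 0"
      using gi by (intro LIMSEQ_le_const) auto
    then show ?thesis by simp
  qed
  show ?thesis using ucI fixpt uniq by blast
qed



lemma cont_bound: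
  fixes h :: "real \<Rightarrow> 'a::real_normed_vector" and a b :: "real \<Rightarrow> 'c::real_normed_vector"
    and r :: "real \<Rightarrow> 'd::real_normed_vector"
  assumes ca: "continuous_on I a" and cb: "continuous_on I b" and cr: "continuous_on I r"
    and le: "\<And>s t. s \<in> I \<Longrightarrow> t \<in> I \<Longrightarrow> norm (h s - h t) \<le> C * (norm (a s - a t) + norm (b s - b t) + norm (r s - r t))"
  shows "continuous_on I h"
  unfolding continuous_on_def
proof
  fix t assume t: "t \<in> I"
  have za: "((\<lambda>s. norm (a s - a t)) \<longlongrightarrow> 0) (at t within I)"
  proof -
    have "(a \<longlongrightarrow> a t) (at t within I)" using ca t unfolding continuous_on_def by blast
    then have "((\<lambda>s. a s - a t) \<longlongrightarrow> 0) (at t within I)" by (rule iffD1[OF Lim_null])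
    then show ?thesis by (rule tendsto_norm_zero)
  qed
  have zb: "((\<lambda>s. norm (b s - b t)) \<longlongrightarrow> 0) (at t within I)"
  proof -
    have "(b \<longlongrightarrow> b t) (at t within I)" using cb t unfolding continuous_on_def by blast
    then have "((\<lambda>s. b s - b t) \<longlongrightarrow> 0) (at t within I)" by (rule iffD1[OF Lim_null])
    then show ?thesis by (rule tendsto_norm_zero)
  qed
  have zr: "((\<lambda>s. norm (r s - r t)) \<longlongrightarrow> 0) (at t within I)"
  proof -
    have "(r \<longlongrightarrow> r t) (at t within I)" using cr t unfolding continuous_on_def by blast
    then have "((\<lambda>s. r s - r t) \<longlongrightarrow> 0) (at t within I)" by (rule iffD1[OF Lim_null])
    then show ?thesis by (rule tendsto_norm_zero)
  qed
  have g: "((\<lambda>s. C * (norm (a s - a t) + norm (b s - b t) + norm (r s - r t))) \<longlongrightarrow> C * (0 + 0 + 0)) (at t within I)"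
    by (intro tendsto_mult tendsto_const tendsto_add za zb zr)
  have ev: "\<forall>\<^sub>F s in at t within I. norm (h s - h t) \<le> C * (norm (a s - a t) + norm (b s - b t) + norm (r s - r t))"
    using le t by (auto simp: eventually_at_filter)
  have "((\<lambda>s. h s - h t) \<longlongrightarrow> 0) (at t within I)"
    using Lim_null_comparison[OF ev] g by simp
  then show "(h \<longlongrightarrow> h t) (at t within I)" by (rule iffD2[OF Lim_null])
qed

theorem corollary3p1:
  fixes A :: "'a::{real_inner,complete_space} \<Rightarrow> 'a"
    and K :: "'a set"
    and j :: "'b::{real_inner,complete_space} \<Rightarrow> 'a \<Rightarrow> real"
    and f :: "real \<Rightarrow> 'a"
    and R :: "(real \<Rightarrow> 'a) \<Rightarrow> (real \<Rightarrow> 'b)"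
    and S :: "(real \<Rightarrow> 'a) \<Rightarrow> (real \<Rightarrow> 'a)"
    and I :: "real set" and T m\<^sub>A L\<^sub>A \<alpha>\<^sub>j :: real
  assumes I: "(T > 0 \<and> I = {0..T}) \<or> I = {0..}"
    and K: "K \<noteq> {}" "closed K" "convex K" "cone K"
    and A_mon: "\<And>u v. (A u - A v) \<bullet> (u - v) \<ge> m\<^sub>A * (norm (u - v))\<^sup>2"
    and A_lip: "\<And>u v. norm (A u - A v) \<le> L\<^sub>A * norm (u - v)"
    and mA: "m\<^sub>A > 0" and LA: "L\<^sub>A > 0"
    and j_convex: "\<And>\<eta>. convex_on K (j \<eta>)"
    and j_hom: "\<And>\<eta> c v. c > 0 \<Longrightarrow> v \<in> K \<Longrightarrow> j \<eta> (c *\<^sub>R v) = c * j \<eta> v"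
    and j_lip: "\<And>\<eta>. \<exists>L. L-lipschitz_on K (j \<eta>)"
    and alpha: "\<alpha>\<^sub>j \<ge> 0"
    and j_ineq: "\<And>\<eta>1 \<eta>2 v1 v2. v1 \<in> K \<Longrightarrow> v2 \<in> K \<Longrightarrow>
        j \<eta>1 v2 - j \<eta>1 v1 + j \<eta>2 v1 - j \<eta>2 v2 \<le> \<alpha>\<^sub>j * norm (\<eta>1 - \<eta>2) * norm (v1 - v2)"
    and f: "continuous_on I f"
    and R: "maps_continuous I R" "history_dependent I R"
    and S: "maps_continuous I S" "history_dependent I S"
  shows "\<exists>u. continuous_on I u
           \<and> (\<forall>t\<in>I. - u t \<in> normal_cone (Cset_t j K f (R u t) t) (A (u t) + S u t))
           \<and> (\<forall>t\<in>I. u t \<in> K)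
           \<and> (\<forall>v. continuous_on I v
                  \<and> (\<forall>t\<in>I. - v t \<in> normal_cone (Cset_t j K f (R v t) t) (A (v t) + S v t))
                  \<longrightarrow> (\<forall>t\<in>I. v t = u t))"
proof -
  interpret V: visetting A K j m\<^sub>A L\<^sub>A \<alpha>\<^sub>j
  proof (unfold_locales)
    show "K \<noteq> {}" "closed K" "convex K" "cone K" by (fact K)+
    show "\<And>u v. (A u - A v) \<bullet> (u - v) \<ge> m\<^sub>A * (norm (u - v))\<^sup>2" by (fact A_mon)
    show "\<And>u v. norm (A u - A v) \<le> L\<^sub>A * norm (u - v)" by (fact A_lip)
    show "m\<^sub>A > 0" "L\<^sub>A > 0" by (fact mA, fact LA)
    show "\<And>\<eta>. convex_on K (j \<eta>)" by (fact j_convex)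
    show "\<And>\<eta> c v. c > 0 \<Longrightarrow> v \<in> K \<Longrightarrow> j \<eta> (c *\<^sub>R v) = c * j \<eta> v" by (fact j_hom)
    show "\<And>\<eta>. \<exists>L. L-lipschitz_on K (j \<eta>)" by (fact j_lip)
    show "\<alpha>\<^sub>j \<ge> 0" by (fact alpha)
    show "\<And>\<eta>1 \<eta>2 v1 v2. v1 \<in> K \<Longrightarrow> v2 \<in> K \<Longrightarrow>
        j \<eta>1 v2 - j \<eta>1 v1 + j \<eta>2 v1 - j \<eta>2 v2 \<le> \<alpha>\<^sub>j * norm (\<eta>1 - \<eta>2) * norm (v1 - v2)" by (fact j_ineq)
  qed
  define \<Lambda> where "\<Lambda> w t = V.sol (R w t) (f t - S w t)" for w t
  have \<Lambda>cont: "continuous_on I (\<Lambda> w)" if w: "continuous_on I w" for w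
  proof (rule cont_bound[where a = f and b = "S w" and r = "R w" and C = "(1 + \<alpha>\<^sub>j) / m\<^sub>A"])
    show "continuous_on I f" by (fact f)
    show "continuous_on I (S w)" using S(1) w unfolding maps_continuous_def by blast
    show "continuous_on I (R w)" using R(1) w unfolding maps_continuous_def by blast
    fix s t assume "s \<in> I" "t \<in> I"
    have "norm (\<Lambda> w s - \<Lambda> w t) \<le> (norm ((f s - S w s) - (f t - S w t)) + \<alpha>\<^sub>j * norm (R w s - R w t)) / m\<^sub>A"
      unfolding \<Lambda>_def by (rule V.sol_lip)
    also have "\<dots> \<le> (norm (f s - f t) + norm (S w s - S w t) + \<alpha>\<^sub>j * norm (R w s - R w t)) / m\<^sub>A"
    proof -
      have "norm ((f s - S w s) - (f t - S w t)) \<le> norm (f s - f t) + norm (S w s - S w t)"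
        using norm_triangle_ineq4[of "f s - f t" "S w s - S w t"] by (simp add: algebra_simps)
      then show ?thesis using mA by (simp add: divide_right_mono)
    qed
    also have "\<dots> \<le> (1 + \<alpha>\<^sub>j) / m\<^sub>A * (norm (f s - f t) + norm (S w s - S w t) + norm (R w s - R w t))"
    proof -
      have "norm (f s - f t) + norm (S w s - S w t) + \<alpha>\<^sub>j * norm (R w s - R w t)
          \<le> (1 + \<alpha>\<^sub>j) * (norm (f s - f t) + norm (S w s - S w t) + norm (R w s - R w t))"
        using alpha by (simp add: algebra_simps)
      then show ?thesis using mA by (simp add: divide_right_mono)
    qed
    finally show "norm (\<Lambda> w s - \<Lambda> w t) \<le> (1 + \<alpha>\<^sub>j) / m\<^sub>A * (norm (f s - f t) + norm (S w s - S w t) + norm (R w s - R w t))" .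
  qed
  have \<Lambda>hd: "\<exists>c>0. \<forall>w w'. continuous_on I w \<and> continuous_on I w' \<longrightarrow>
               (\<forall>t\<in>J. norm (\<Lambda> w t - \<Lambda> w' t) \<le> c * integral {0..t} (\<lambda>s. norm (w s - w' s)))"
    if J: "compact J" "J \<subseteq> I" for J
  proof -
    obtain LR where LR: "LR > 0" "\<forall>u1 u2. continuous_on I u1 \<and> continuous_on I u2 \<longrightarrow>
            (\<forall>t\<in>J. norm (R u1 t - R u2 t) \<le> LR * integral {0..t} (\<lambda>s. norm (u1 s - u2 s)))"
      using R(2) J unfolding history_dependent_def by blast
    obtain LS where LS: "LS > 0" "\<forall>u1 u2. continuous_on I u1 \<and> continuous_on I u2 \<longrightarrow>
            (\<forall>t\<in>J. norm (S u1 t - S u2 t) \<le> LS * integral {0..t} (\<lambda>s. norm (u1 s - u2 s)))"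
      using S(2) J unfolding history_dependent_def by blast
    show ?thesis
    proof (intro exI[of _ "(LS + \<alpha>\<^sub>j * LR) / m\<^sub>A"] conjI allI impI ballI)
      show "(LS + \<alpha>\<^sub>j * LR) / m\<^sub>A > 0" using LS LR alpha mA by (simp add: add_pos_nonneg)
      fix w w' :: "real \<Rightarrow> 'a" and t assume ww: "continuous_on I w \<and> continuous_on I w'" and t: "t \<in> J"
      define q where "q = integral {0..t} (\<lambda>s. norm (w s - w' s))"
      have r: "norm (R w t - R w' t) \<le> LR * q" using LR(2) ww t unfolding q_def by blast
      have s: "norm (S w t - S w' t) \<le> LS * q" using LS(2) ww t unfolding q_def by blast
      have "norm (\<Lambda> w t - \<Lambda> w' t) \<le> (norm ((f t - S w t) - (f t - S w' t)) + \<alpha>\<^sub>j * norm (R w t - R w' t)) / m\<^sub>A"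
        unfolding \<Lambda>_def by (rule V.sol_lip)
      also have "\<dots> = (norm (S w t - S w' t) + \<alpha>\<^sub>j * norm (R w t - R w' t)) / m\<^sub>A"
        by (simp add: norm_minus_commute)
      also have "\<dots> \<le> (LS * q + \<alpha>\<^sub>j * (LR * q)) / m\<^sub>A"
        using r s alpha mA by (intro divide_right_mono add_mono mult_left_mono) auto
      also have "\<dots> = (LS + \<alpha>\<^sub>j * LR) / m\<^sub>A * q" by (simp add: algebra_simps)
      finally show "norm (\<Lambda> w t - \<Lambda> w' t) \<le> (LS + \<alpha>\<^sub>j * LR) / m\<^sub>A * integral {0..t} (\<lambda>s. norm (w s - w' s))"
        unfolding q_def .
    qed
  qed
  obtain u where u: "continuous_on I u" "\<forall>t\<in>I. \<Lambda> u t = u t"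
    and uu: "\<forall>v. continuous_on I v \<and> (\<forall>t\<in>I. \<Lambda> v t = v t) \<longrightarrow> (\<forall>t\<in>I. v t = u t)"
    using hist_fix[OF I, of \<Lambda>] \<Lambda>cont \<Lambda>hd by blast
  have eqx: "A x + s - f t = A x - (f t - s)" for x s t by (simp add: algebra_simps)
  have incl_iff: "- v t \<in> normal_cone (Cset_t j K f (R v t) t) (A (v t) + S v t) \<longleftrightarrow>
      V.VI (R v t) (f t - S v t) (v t)" for v t
    unfolding V.char V.VI_def eqx ..
  have uVI: "V.VI (R u t) (f t - S u t) (u t)" if "t \<in> I" for t
    using V.sol_VI[of "R u t" "f t - S u t"] u(2) that unfolding \<Lambda>_def by metis
  show ?thesis
  proof (intro exI[of _ u] conjI ballI allI impI)
    show "continuous_on I u" by (fact u(1))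
    fix t assume t: "t \<in> I"
    show "- u t \<in> normal_cone (Cset_t j K f (R u t) t) (A (u t) + S u t)" using uVI[OF t] incl_iff by blast
    show "u t \<in> K" using uVI[OF t] unfolding V.VI_def by blast
  next
    fix v t assume v: "continuous_on I v \<and> (\<forall>t\<in>I. - v t \<in> normal_cone (Cset_t j K f (R v t) t) (A (v t) + S v t))"
      and t: "t \<in> I"
    have "\<forall>t\<in>I. \<Lambda> v t = v t"
    proof
      fix s assume "s \<in> I"
      then have "V.VI (R v s) (f s - S v s) (v s)" using v incl_iff by blast
      then show "\<Lambda> v s = v s" unfolding \<Lambda>_def by (rule V.sol_eq)
    qed
    then show "v t = u t" using uu v t by blast
  qed
qed


end
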